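(* Let $s_1\ge 1$ and $s_2\ge 0$ be integers, and for integers $N$ let $$f_{s_1,s_2}(N)=\binom{s_2}{N}\sum_{i}\binom{s_1}{i}\binom{s_1}{N-i}\binom{N}{i}.$$ Then there is an integer $g(s_1,s_2)$ such that $f_{s_1,s_2}(N)$ is a non-decreasing function of $N$ for integers $N\le g(s_1,s_2)$ and a non-increasing function of $N$ for integers $N\ge g(s_1,s_2)$. Moreover, $$g(s_1,s_2)=\left\lfloor 2s_1+s_2+\tfrac32-\sqrt{4s_1^2+4s_1+(s_2+\tfrac12)^2}\right\rfloor+\delta$$ with $\delta\in\{0,1\}$.
   Context: Binomial coefficients $\binom{a}{b}$ are taken to be $0$ when $b<0$ or $b>a$; the sum is over all integers $i$. If $f_{s_1,s_2}$ attains equal maxima at two consecutive integers $N$ and $N+1$, either may be taken as $g(s_1,s_2)$. $\lfloor\cdot\rfloor$ denotes the integer part. *)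

theory Defs
  imports Complex_Main
begin

definition ibinom :: "int \<Rightarrow> int \<Rightarrow> int" where
  "ibinom a b = (if 0 \<le> b \<and> b \<le> a then int (nat a choose nat b) else 0)"

text \<open>f_{s1,s2}(N). The sum over all integers i is written over {0..s1}:
  every term with i outside this range vanishes since ibinom s1 i = 0 there.\<close>
definition f12 :: "int \<Rightarrow> int \<Rightarrow> int \<Rightarrow> int" where
  "f12 s1 s2 N = ibinom s2 N * (\<Sum>i\<in>{0..s1}. ibinom s1 i * ibinom s1 (N - i) * ibinom N i)"

end

theory Submission
  imports Defs
begin

definition cc :: "nat \<Rightarrow> nat \<Rightarrow> real" where
  "cc s i = real (s choose i) / fact i"
definition bb :: "nat \<Rightarrow> nat \<Rightarrow> real" where
  "bb s n = (\<Sum>i\<le>n. cc s i * cc s (n - i))"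
definition zz :: "nat \<Rightarrow> nat \<Rightarrow> real" where
  "zz s n = (\<Sum>i\<le>n. real i * real (n - i) * cc s i * cc s (n - i))"

lemma cc_nonneg: "cc s i \<ge> 0" by (simp add: cc_def)

lemma cc_step: "(real i + 1)^2 * cc s (Suc i) = (real s - real i) * cc s i"
proof (cases "i \<le> s")
  case True
  have nat: "Suc i * (s choose Suc i) = (s - i) * (s choose i)"
    using binomial_absorption[of i s] binomial_absorb_comp[of s i] by simp
  hence r: "(real i + 1) * real (s choose Suc i) = (real s - real i) * real (s choose i)"
  proof -
    have "real (Suc i * (s choose Suc i)) = real ((s - i) * (s choose i))" using nat by (simp only:)
    thus ?thesis using True by (simp add: of_nat_diff algebra_simps)
  qed
  have f: "fact (Suc i) = (real i + 1) * (fact i :: real)" by (simp add: algebra_simps)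
  have "(real i + 1)^2 * cc s (Suc i) = (real i + 1) * real (s choose Suc i) / fact i"
  proof -
    have p: "(fact i :: real) > 0" "real i + 1 > 0" by auto
    have q: "(fact i :: real) + fact i * real i \<noteq> 0" using p
    proof -
      have "(fact i :: real) + fact i * real i = fact i * (real i + 1)" by (simp add: algebra_simps)
      thus ?thesis using p by simp
    qed
    show ?thesis unfolding cc_def f using p q by (simp add: power2_eq_square field_simps)
  qed
  also have "\<dots> = (real s - real i) * cc s i" unfolding cc_def r by simp
  finally show ?thesis .
next
  case False
  then show ?thesis by (simp add: cc_def binomial_eq_0)
qed

lemma sum_reflect: "(\<Sum>i\<le>(n::nat). g i (n - i)) = (\<Sum>i\<le>n. (g (n - i) i :: real))"
  apply (rule sum.reindex_bij_witness[where i="\<lambda>i. n - i" and j="\<lambda>i. n - i"])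
  apply (simp_all add: diff_diff_cancel)
  done

lemma shift_sum:
  "(\<Sum>i\<le>Suc n. (real i)^2 * w (i - 1) (Suc n - i) * cc s i * cc s (Suc n - i))
   = (\<Sum>i\<le>n. (real s - real i) * w i (n - i) * cc s i * cc s (n - i))"
proof -
  have "(\<Sum>i\<le>Suc n. (real i)^2 * w (i - 1) (Suc n - i) * cc s i * cc s (Suc n - i))
      = (\<Sum>i\<le>n. (real (Suc i))^2 * w i (n - i) * cc s (Suc i) * cc s (n - i))"
    by (subst sum.atMost_Suc_shift) simp
  also have "\<dots> = (\<Sum>i\<le>n. (real s - real i) * w i (n - i) * cc s i * cc s (n - i))"
  proof (rule sum.cong[OF refl])
    fix i assume "i \<in> {..n}"
    have "(real (Suc i))^2 * cc s (Suc i) = (real s - real i) * cc s i"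
      using cc_step[of i s] by (simp add: add.commute)
    thus "(real (Suc i))^2 * w i (n - i) * cc s (Suc i) * cc s (n - i)
        = (real s - real i) * w i (n - i) * cc s i * cc s (n - i)"
    proof -
      have "(real (Suc i))^2 * w i (n - i) * cc s (Suc i) * cc s (n - i) = ((real (Suc i))^2 * cc s (Suc i)) * (w i (n - i) * cc s (n - i))" by (simp only: mult_ac)
      also have "\<dots> = ((real s - real i) * cc s i) * (w i (n - i) * cc s (n - i))" by (simp only: \<open>(real (Suc i))^2 * cc s (Suc i) = (real s - real i) * cc s i\<close>)
      finally show ?thesis by (simp only: mult_ac)
    qed
  qed
  finally show ?thesis .
qed

lemma Y_rel: "(real n + 1)^2 * bb s (Suc n) + (real n - 2 * real s) * bb s n = 2 * zz s (Suc n)"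
proof -
  let ?T = "\<lambda>m i. cc s i * cc s (m - i)"
  have S2: "(\<Sum>i\<le>Suc n. (real i)^2 * ?T (Suc n) i) = (\<Sum>i\<le>n. (real s - real i) * ?T n i)"
    using shift_sum[where n=n and w="\<lambda>_ _. 1" and s=s] by (simp add: mult.assoc)
  have R2: "(\<Sum>i\<le>Suc n. (real (Suc n - i))^2 * ?T (Suc n) i) = (\<Sum>i\<le>Suc n. (real i)^2 * ?T (Suc n) i)"
    using sum_reflect[where g="\<lambda>i j. (real j)^2 * cc s i * cc s j" and n="Suc n"]
    by (simp add: mult_ac)
  have R1: "(\<Sum>i\<le>n. (real s - real (n - i)) * ?T n i) = (\<Sum>i\<le>n. (real s - real i) * ?T n i)"
    using sum_reflect[where g="\<lambda>i j. (real s - real j) * cc s i * cc s j" and n=n]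
    by (simp add: mult_ac)
  have A: "(real n + 1)^2 * bb s (Suc n) = (\<Sum>i\<le>Suc n. ((real i)^2 + (real (Suc n - i))^2 + 2 * (real i * real (Suc n - i))) * ?T (Suc n) i)"
    unfolding bb_def sum_distrib_left
  proof (rule sum.cong[OF refl])
    fix i assume "i \<in> {..Suc n}"
    hence "real i + real (Suc n - i) = real n + 1" by auto
    hence "(real n + 1)^2 = (real i)^2 + (real (Suc n - i))^2 + 2 * (real i * real (Suc n - i))"
      by (simp add: power2_sum flip: \<open>real i + real (Suc n - i) = real n + 1\<close>)
    thus "(real n + 1)^2 * ?T (Suc n) i = ((real i)^2 + (real (Suc n - i))^2 + 2 * (real i * real (Suc n - i))) * ?T (Suc n) i"
      by simp
  qed
  also have "\<dots> = (\<Sum>i\<le>Suc n. (real i)^2 * ?T (Suc n) i) + (\<Sum>i\<le>Suc n. (real (Suc n - i))^2 * ?T (Suc n) i) + 2 * zz s (Suc n)"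
    unfolding zz_def sum_distrib_left sum.distrib[symmetric] by (rule sum.cong[OF refl]) (simp add: algebra_simps)
  also have "\<dots> = 2 * (\<Sum>i\<le>n. (real s - real i) * ?T n i) + 2 * zz s (Suc n)"
    using R2 S2 by simp
  also have "2 * (\<Sum>i\<le>n. (real s - real i) * ?T n i) = (\<Sum>i\<le>n. (real s - real i) * ?T n i) + (\<Sum>i\<le>n. (real s - real (n - i)) * ?T n i)"
    using R1 by simp
  also have "\<dots> = (\<Sum>i\<le>n. (2 * real s - real n) * ?T n i)"
    unfolding sum.distrib[symmetric]
    by (rule sum.cong[OF refl]) (auto simp: algebra_simps)
  also have "\<dots> = (2 * real s - real n) * bb s n" unfolding bb_def sum_distrib_left by (simp add: mult_ac)
  finally show ?thesis by (simp add: algebra_simps)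
qed

lemma Z_rel: "(real n + 1) * zz s (Suc n) = real s * real n * bb s n - 2 * zz s n"
proof -
  let ?T = "\<lambda>m i. cc s i * cc s (m - i)"
  have S2: "(\<Sum>i\<le>Suc n. (real i)^2 * real (Suc n - i) * ?T (Suc n) i) = (\<Sum>i\<le>n. (real s - real i) * real (n - i) * ?T n i)"
    using shift_sum[where n=n and w="\<lambda>_ b. real b" and s=s] by (simp add: mult.assoc)
  have R2: "(\<Sum>i\<le>Suc n. real i * (real (Suc n - i))^2 * ?T (Suc n) i) = (\<Sum>i\<le>Suc n. (real i)^2 * real (Suc n - i) * ?T (Suc n) i)"
    using sum_reflect[where g="\<lambda>i j. real i * (real j)^2 * cc s i * cc s j" and n="Suc n"]
    by (simp add: mult_ac)
  have R1: "(\<Sum>i\<le>n. (real s - real (n - i)) * real i * ?T n i) = (\<Sum>i\<le>n. (real s - real i) * real (n - i) * ?T n i)"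
    using sum_reflect[where g="\<lambda>i j. (real s - real j) * real i * cc s i * cc s j" and n=n]
    by (simp add: mult_ac)
  have A: "(real n + 1) * zz s (Suc n) = (\<Sum>i\<le>Suc n. ((real i)^2 * real (Suc n - i) + real i * (real (Suc n - i))^2) * ?T (Suc n) i)"
    unfolding zz_def sum_distrib_left
  proof (rule sum.cong[OF refl])
    fix i assume "i \<in> {..Suc n}"
    hence "real i + real (Suc n - i) = real n + 1" by auto
    hence "(real n + 1) * (real i * real (Suc n - i)) = (real i)^2 * real (Suc n - i) + real i * (real (Suc n - i))^2"
      by (simp add: power2_eq_square algebra_simps flip: \<open>real i + real (Suc n - i) = real n + 1\<close>)
    thus "(real n + 1) * (real i * real (Suc n - i) * cc s i * cc s (Suc n - i)) = ((real i)^2 * real (Suc n - i) + real i * (real (Suc n - i))^2) * ?T (Suc n) i"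
      by (simp add: mult.assoc)
  qed
  also have "\<dots> = (\<Sum>i\<le>Suc n. (real i)^2 * real (Suc n - i) * ?T (Suc n) i) + (\<Sum>i\<le>Suc n. real i * (real (Suc n - i))^2 * ?T (Suc n) i)"
    unfolding sum.distrib[symmetric] by (rule sum.cong[OF refl]) (simp add: algebra_simps)
  also have "\<dots> = 2 * (\<Sum>i\<le>n. (real s - real i) * real (n - i) * ?T n i)"
    using R2 S2 by simp
  also have "\<dots> = (\<Sum>i\<le>n. (real s - real i) * real (n - i) * ?T n i) + (\<Sum>i\<le>n. (real s - real (n - i)) * real i * ?T n i)"
    using R1 by simp
  also have "\<dots> = (\<Sum>i\<le>n. real s * real n * ?T n i - 2 * (real i * real (n - i) * ?T n i))"
    unfolding sum.distrib[symmetric]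
    by (rule sum.cong[OF refl]) (auto simp: algebra_simps)
  also have "\<dots> = real s * real n * bb s n - 2 * zz s n"
    unfolding bb_def zz_def sum_subtractf sum_distrib_left by (simp add: mult_ac)
  finally show ?thesis .
qed

lemma cc_zero: "i > s \<Longrightarrow> cc s i = 0" by (simp add: cc_def binomial_eq_0)

lemma bb_nonneg: "bb s n \<ge> 0"
  unfolding bb_def by (intro sum_nonneg mult_nonneg_nonneg cc_nonneg)

lemma bb_zero: "n > 2 * s \<Longrightarrow> bb s n = 0"
  unfolding bb_def
proof (rule sum.neutral, intro ballI)
  fix i assume "n > 2 * s" "i \<in> {..n}"
  hence "i > s \<or> n - i > s" by auto
  thus "cc s i * cc s (n - i) = 0" using cc_zero by auto
qed

lemma bb_0: "bb s 0 = 1" by (simp add: bb_def cc_def)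
lemma bb_1: "bb s (Suc 0) = 2 * real s" by (simp add: bb_def cc_def atMost_Suc)

lemma bb_rec: "(real n + 2)^3 * bb s (n+2) =
   (2 * real s + (4 * real s - 1) * (real n + 1) - 3 * (real n + 1)^2) * bb s (n+1)
   + 2 * (2 * real s - real n) * bb s n"
proof -
  have e1: "(real n + 2)^2 * bb s (n+2) + (real n + 1 - 2 * real s) * bb s (n+1) = 2 * zz s (n+2)"
    using Y_rel[of "Suc n" s] by (simp add: add.commute add.left_commute)
  have e2: "(real n + 2) * zz s (n+2) = real s * (real n + 1) * bb s (n+1) - 2 * zz s (n+1)"
    using Z_rel[of "Suc n" s] by (simp add: add.commute add.left_commute)
  have e3: "(real n + 1)^2 * bb s (n+1) + (real n - 2 * real s) * bb s n = 2 * zz s (n+1)"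
    using Y_rel[of n s] by simp
  show ?thesis using e1 e2 e3 by algebra
qed

definition DD :: "nat \<Rightarrow> nat \<Rightarrow> real" where
  "DD s n = 2 * (2 * real s - real n) * bb s n - (real n + 1)^2 * bb s (n+1)"
definition EE :: "nat \<Rightarrow> nat \<Rightarrow> real" where
  "EE s n = ((real n)^2 + real n + 2 * real s) * bb s (n+1) - 2 * (2 * real s - real n) * bb s n"
definition cf :: "nat \<Rightarrow> nat \<Rightarrow> real" where
  "cf s n = (2 * real n + 1) * (2 * real s - real n - 1) - (real n + 1)^2"

lemma I1: "(real m + 2) * DD s (m+1) = EE s m"
  using bb_rec[of m s] unfolding DD_def EE_def by (simp add: algebra_simps) algebra

lemma I2: "(real m + 2)^3 * EE s (m+1) =
   ((real m + 2)^2 + (2 * real s - real m - 1) - 1) * DD s m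
   + cf s (m+1) * (2 * real s - real m - 1) * bb s (m+1)"
  using bb_rec[of m s] unfolding DD_def EE_def cf_def by (simp add: algebra_simps) algebra

lemma cf_mono:
  assumes s1: "s \<ge> 1" and neg: "cf s M < 0" and le: "M \<le> M'"
  shows "cf s M' < 0"
proof -
  have h: "cf s M = real M * (4 * real s - 5 - 3 * real M) + 2 * real s - 2"
    unfolding cf_def by (simp add: algebra_simps power2_eq_square)
  have h': "cf s M' = real M' * (4 * real s - 5 - 3 * real M') + 2 * real s - 2"
    unfolding cf_def by (simp add: algebra_simps power2_eq_square)
  have rs: "real s \<ge> 1" using s1 by simp
  have lm: "real M \<le> real M'" using le by simp
  have m0: "real M \<ge> 0" by simp
  have big: "3 * real M > 4 * real s - 5"
  proof (rule ccontr)
    assume "\<not> ?thesis"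
    hence "real M * (4 * real s - 5 - 3 * real M) \<ge> 0" using m0 by (intro mult_nonneg_nonneg) auto
    thus False using neg h rs by linarith
  qed
  have "cf s M' - cf s M = (real M' - real M) * (4 * real s - 5 - 3 * real M' - 3 * real M)"
    unfolding h h' by (simp add: algebra_simps)
  also have "\<dots> \<le> 0" using lm big by (intro mult_nonneg_nonpos) auto
  finally show ?thesis using neg by linarith
qed

lemma up:
  assumes s1: "s \<ge> 1"
  shows "N \<le> 2 * s \<Longrightarrow> (\<forall>M\<in>{1..N}. cf s M \<ge> 0) \<Longrightarrow> DD s N \<ge> 0 \<and> EE s N \<ge> 0"
proof (induction N)
  case 0
  have "DD s 0 = 2 * real s" unfolding DD_def by (simp add: bb_0 bb_1)
  moreover have "EE s 0 = 4 * (real s)^2 - 4 * real s" unfolding EE_def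
    by (simp add: bb_0 bb_1 power2_eq_square)
  moreover have "4 * (real s)^2 - 4 * real s \<ge> 0"
  proof -
    have "4 * (real s)^2 - 4 * real s = 4 * real s * (real s - 1)" by (simp add: algebra_simps power2_eq_square)
    thus ?thesis using s1 by simp
  qed
  ultimately show ?case by simp
next
  case (Suc m)
  have IH: "DD s m \<ge> 0 \<and> EE s m \<ge> 0" using Suc by auto
  have "(real m + 2) * DD s (m+1) \<ge> 0" using I1[of m s] IH by simp
  hence D1: "DD s (Suc m) \<ge> 0" by (simp add: zero_le_mult_iff)
  have t: "2 * real s - real m - 1 \<ge> 0" using Suc.prems by linarith
  have c: "cf s (m+1) \<ge> 0" using Suc.prems by auto
  have "((real m + 2)^2 + (2 * real s - real m - 1) - 1) * DD s m \<ge> 0"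
  proof -
    have "(real m + 2)^2 \<ge> 4"
    proof -
      have "(2::real)^2 \<le> (real m + 2)^2" by (rule power_mono) auto
      thus ?thesis by simp
    qed
    hence "(real m + 2)^2 + (2 * real s - real m - 1) - 1 \<ge> 0" using t by linarith
    thus ?thesis using IH by simp
  qed
  moreover have "cf s (m+1) * (2 * real s - real m - 1) * bb s (m+1) \<ge> 0"
    using c t bb_nonneg by (intro mult_nonneg_nonneg) auto
  ultimately have "(real m + 2)^3 * EE s (m+1) \<ge> 0" using I2[of m s] by linarith
  hence "EE s (Suc m) \<ge> 0" by (simp add: zero_le_mult_iff)
  with D1 show ?case by simp
qed

lemma down_step:
  assumes P: "DD s (m+1) \<ge> 0" "EE s (m+1) \<ge> 0"
    and ct: "cf s (m+1) * (2 * real s - real m - 1) * bb s (m+1) \<le> 0"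
    and co: "(real m + 2)^2 + (2 * real s - real m - 1) - 1 > 0"
  shows "DD s m \<ge> 0 \<and> EE s m \<ge> 0"
proof
  have "(real m + 2) * DD s (m+1) \<ge> 0" using P by simp
  thus "EE s m \<ge> 0" using I1[of m s] by simp
  have "(real m + 2)^3 * EE s (m+1) \<ge> 0" using P by simp
  hence "((real m + 2)^2 + (2 * real s - real m - 1) - 1) * DD s m \<ge> 0"
    using I2[of m s] ct by linarith
  thus "DD s m \<ge> 0" using co by (simp add: zero_le_mult_iff)
qed

lemma top: "DD s (2*s+1) = 0 \<and> EE s (2*s+1) = 0"
  unfolding DD_def EE_def by (simp add: bb_zero)

lemma down:
  assumes s1: "s \<ge> 1" and K: "\<forall>M. K \<le> M \<longrightarrow> M \<le> 2 * s \<longrightarrow> cf s M \<le> 0" and K1: "K \<ge> 1"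
  shows "k + K \<le> 2 * s + 2 \<Longrightarrow> DD s (2*s+1-k) \<ge> 0 \<and> EE s (2*s+1-k) \<ge> 0"
proof (induction k)
  case 0 thus ?case using top by simp
next
  case (Suc k)
  define m where "m = 2*s+1 - Suc k"
  have mk: "m + 1 = 2*s+1-k" using Suc.prems K1 unfolding m_def by simp
  have IH: "DD s (m+1) \<ge> 0" "EE s (m+1) \<ge> 0" using Suc mk by auto
  have mK: "m + 1 \<ge> K" using Suc.prems unfolding m_def by simp
  have ct: "cf s (m+1) * (2 * real s - real m - 1) * bb s (m+1) \<le> 0"
  proof (cases "m + 1 \<le> 2 * s")
    case True
    hence "cf s (m+1) \<le> 0" using K mK by auto
    moreover have "2 * real s - real m - 1 \<ge> 0" using True by linarith
    ultimately have "cf s (m+1) * (2 * real s - real m - 1) \<le> 0" by (simp add: mult_nonpos_nonneg)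
    thus ?thesis using bb_nonneg by (simp add: mult_nonpos_nonneg)
  next
    case False
    hence "bb s (m+1) = 0" by (intro bb_zero) simp
    thus ?thesis by simp
  qed
  have co: "(real m + 2)^2 + (2 * real s - real m - 1) - 1 > 0"
  proof -
    have "m \<le> 2 * s" using Suc.prems K1 unfolding m_def by simp
    hence "2 * real s - real m - 1 \<ge> -1" by linarith
    moreover have "(real m + 2)^2 \<ge> 4"
    proof -
      have "(2::real)^2 \<le> (real m + 2)^2" by (rule power_mono) auto
      thus ?thesis by simp
    qed
    ultimately show ?thesis by linarith
  qed
  show ?case using down_step[OF IH ct co] unfolding m_def by simp
qed

lemma DE_nonneg:
  assumes s1: "s \<ge> 1"
  shows "DD s n \<ge> 0 \<and> EE s n \<ge> 0"
proof (cases "n \<le> 2 * s")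
  case False
  hence "bb s n = 0" "bb s (n+1) = 0" by (auto intro: bb_zero)
  thus ?thesis unfolding DD_def EE_def by simp
next
  case True
  show ?thesis
  proof (cases "\<forall>M\<in>{1..n}. cf s M \<ge> 0")
    case True
    thus ?thesis using up[OF s1] \<open>n \<le> 2 * s\<close> by blast
  next
    case False
    then obtain M where M: "M \<in> {1..n}" "cf s M < 0" by force
    have K: "\<forall>M'. M \<le> M' \<longrightarrow> M' \<le> 2 * s \<longrightarrow> cf s M' \<le> 0"
      using cf_mono[OF s1 M(2)] by (auto intro: less_imp_le)
    have "(2*s+1 - n) + M \<le> 2 * s + 2" using M \<open>n \<le> 2 * s\<close> by auto
    from down[OF s1 K _ this] M have "DD s (2*s+1-(2*s+1-n)) \<ge> 0 \<and> EE s (2*s+1-(2*s+1-n)) \<ge> 0" by auto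
    moreover have "2*s+1-(2*s+1-n) = n" using \<open>n \<le> 2 * s\<close> by simp
    ultimately show ?thesis by simp
  qed
qed

lemma ibinom_nat: "ibinom (int a) (int b) = int (a choose b)"
  unfolding ibinom_def by (auto simp: binomial_eq_0)

lemma ibinom_neg: "b < 0 \<Longrightarrow> ibinom a b = 0"
  unfolding ibinom_def by auto

lemma inner_sum:
  "(\<Sum>i\<in>{0..int s}. ibinom (int s) i * ibinom (int s) (int n - i) * ibinom (int n) i)
   = (\<Sum>k\<le>n. int ((s choose k) * (s choose (n-k)) * (n choose k)))"
proof -
  let ?G = "\<lambda>k. int ((s choose k) * (s choose (n-k)) * (n choose k))"
  have "(\<Sum>i\<in>{0..int s}. ibinom (int s) i * ibinom (int s) (int n - i) * ibinom (int n) i)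
      = (\<Sum>k\<in>{0..s}. ibinom (int s) (int k) * ibinom (int s) (int n - int k) * ibinom (int n) (int k))"
  proof -
    have e: "{0..int s} = int ` {0..s}" by (simp add: image_int_atLeastAtMost)
    show ?thesis unfolding e by (subst sum.reindex) (auto simp: inj_on_def)
  qed
  also have "\<dots> = (\<Sum>k\<in>{..s}. if k \<in> {..n} then ?G k else 0)"
  proof (rule sum.cong)
    fix k assume "k \<in> {..s}"
    show "ibinom (int s) (int k) * ibinom (int s) (int n - int k) * ibinom (int n) (int k)
        = (if k \<in> {..n} then ?G k else 0)"
    proof (cases "k \<le> n")
      case True
      hence eq: "int n - int k = int (n - k)" by simp
      show ?thesis unfolding eq ibinom_nat using True by simp
    next
      case False
      hence "ibinom (int n) (int k) = 0" unfolding ibinom_def by auto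
      thus ?thesis using False by simp
    qed
  qed (auto simp: atLeast0AtMost)
  also have "\<dots> = (\<Sum>k\<in>{..s} \<inter> {..n}. ?G k)"
    by (rule sum.inter_restrict[symmetric]) simp
  also have "\<dots> = (\<Sum>k\<le>n. ?G k)"
  proof (rule sum.mono_neutral_left)
    show "\<forall>k\<in>{..n} - {..s} \<inter> {..n}. ?G k = 0" by (auto simp: binomial_eq_0)
  qed auto
  finally show ?thesis .
qed

lemma term_real:
  assumes "k \<le> n"
  shows "real ((s choose k) * (s choose (n-k)) * (n choose k)) = fact n * (cc s k * cc s (n - k))"
proof -
  have b: "real (n choose k) = fact n / (fact k * fact (n - k))" using binomial_fact[OF assms] by simp
  have "real ((s choose k) * (s choose (n-k)) * (n choose k)) = real (s choose k) * real (s choose (n-k)) * (fact n / (fact k * fact (n - k)))"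
    by (simp only: of_nat_mult b)
  also have "\<dots> = fact n * (cc s k * cc s (n - k))" unfolding cc_def by simp
  finally show ?thesis .
qed

lemma inner_real:
  "real_of_int (\<Sum>i\<in>{0..int s}. ibinom (int s) i * ibinom (int s) (int n - i) * ibinom (int n) i)
   = fact n * bb s n"
proof -
  have "real_of_int (\<Sum>i\<in>{0..int s}. ibinom (int s) i * ibinom (int s) (int n - i) * ibinom (int n) i)
     = (\<Sum>k\<le>n. real ((s choose k) * (s choose (n-k)) * (n choose k)))"
    unfolding inner_sum by simp
  also have "\<dots> = (\<Sum>k\<le>n. fact n * (cc s k * cc s (n - k)))"
  proof (rule sum.cong[OF refl])
    fix k assume "k \<in> {..n}"
    thus "real ((s choose k) * (s choose (n-k)) * (n choose k)) = fact n * (cc s k * cc s (n - k))"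
      using term_real[of k n s] by simp
  qed
  also have "\<dots> = fact n * bb s n" unfolding bb_def by (simp add: sum_distrib_left)
  finally show ?thesis .
qed

definition FF :: "nat \<Rightarrow> nat \<Rightarrow> nat \<Rightarrow> real" where
  "FF s m2 n = real (m2 choose n) * fact n * bb s n"

lemma f12_eq: "real_of_int (f12 (int s) (int m2) (int n)) = FF s m2 n"
  unfolding f12_def FF_def using inner_real[of s n]
  by (simp add: ibinom_nat mult.assoc)

lemma f12_neg: "N < 0 \<Longrightarrow> f12 s1 s2 N = 0"
  unfolding f12_def by (simp add: ibinom_neg)

lemma FF_nonneg: "FF s m2 n \<ge> 0" unfolding FF_def using bb_nonneg by simp

lemma choose_step: "real (m choose Suc n) * fact (Suc n) = real (m choose n) * fact n * (real m - real n)"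
proof (cases "n \<le> m")
  case True
  have nat: "Suc n * (m choose Suc n) = (m - n) * (m choose n)"
    using binomial_absorption[of n m] binomial_absorb_comp[of m n] by simp
  have "real (Suc n * (m choose Suc n)) = real ((m - n) * (m choose n))" using nat by (simp only:)
  hence r: "(real n + 1) * real (m choose Suc n) = (real m - real n) * real (m choose n)"
    using True by (simp add: of_nat_diff algebra_simps)
  have "real (m choose Suc n) * fact (Suc n) = ((real n + 1) * real (m choose Suc n)) * fact n"
    by (simp add: algebra_simps)
  also have "\<dots> = real (m choose n) * fact n * (real m - real n)" unfolding r by (simp add: algebra_simps)
  finally show ?thesis .
next
  case False
  thus ?thesis by (simp add: binomial_eq_0)
qed

lemma FF_Suc: "FF s m2 (Suc n) = real (m2 choose n) * fact n * (real m2 - real n) * bb s (Suc n)"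
  unfolding FF_def using choose_step[of m2 n] by simp

lemma claimA:
  assumes s1: "s \<ge> 1"
    and h: "2 * (2 * real s - real n) * (real m2 - real n) \<ge> (real n)^2 + real n + 2 * real s"
  shows "FF s m2 n \<le> FF s m2 (Suc n)"
proof -
  let ?P = "real (m2 choose n) * fact n"
  have P0: "?P \<ge> 0" by simp
  have key: "bb s n \<le> (real m2 - real n) * bb s (Suc n)"
  proof (cases "real n > 2 * real s")
    case True
    hence "bb s n = 0" "bb s (Suc n) = 0" by (auto intro!: bb_zero)
    thus ?thesis by simp
  next
    case False
    let ?Q = "(real n)^2 + real n + 2 * real s"
    have Qp: "?Q > 0" using s1 by (simp add: add_nonneg_pos)
    have t: "2 * real s - real n \<ge> 0" using False by simp
    have u: "real m2 - real n > 0"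
    proof (rule ccontr)
      assume "\<not> ?thesis"
      hence "2 * (2 * real s - real n) * (real m2 - real n) \<le> 0" using t
        by (intro mult_nonneg_nonpos) auto
      thus False using h Qp by linarith
    qed
    have E: "?Q * bb s (Suc n) \<ge> 2 * (2 * real s - real n) * bb s n"
      using DE_nonneg[OF s1, of n] unfolding EE_def by simp
    have "?Q * bb s n \<le> (2 * (2 * real s - real n) * (real m2 - real n)) * bb s n"
      using h bb_nonneg by (intro mult_right_mono) auto
    also have "\<dots> = (real m2 - real n) * (2 * (2 * real s - real n) * bb s n)" by simp
    also have "\<dots> \<le> (real m2 - real n) * (?Q * bb s (Suc n))"
      using E u by (intro mult_left_mono) auto
    also have "\<dots> = ?Q * ((real m2 - real n) * bb s (Suc n))" by simp
    finally have "?Q * bb s n \<le> ?Q * ((real m2 - real n) * bb s (Suc n))" .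
    thus ?thesis using Qp by simp
  qed
  have "FF s m2 n = ?P * bb s n" unfolding FF_def by simp
  also have "\<dots> \<le> ?P * ((real m2 - real n) * bb s (Suc n))" using key P0 by (intro mult_left_mono)
  also have "\<dots> = FF s m2 (Suc n)" unfolding FF_Suc by simp
  finally show ?thesis .
qed

lemma claimB:
  assumes s1: "s \<ge> 1"
    and h: "n < m2 \<Longrightarrow> 2 * (2 * real s - real n) * (real m2 - real n) + (2 * real s - real n) + (real m2 - real n) + 2 < (real n)^2 + real n"
  shows "FF s m2 (Suc n) \<le> FF s m2 n"
proof -
  let ?P = "real (m2 choose n) * fact n"
  have P0: "?P \<ge> 0" by simp
  have key: "(real m2 - real n) * bb s (Suc n) \<le> bb s n \<or> ?P = 0"
  proof (cases "n < m2")
    case False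
    show ?thesis
    proof (cases "n = m2")
      case True thus ?thesis using bb_nonneg by simp
    next
      case False
      hence "m2 < n" using \<open>\<not> n < m2\<close> by simp
      thus ?thesis by (simp add: binomial_eq_0)
    qed
  next
    case True
    note hh = h[OF True]
    show ?thesis
    proof (cases "n \<ge> 2 * s")
      case True
      hence "bb s (Suc n) = 0" by (intro bb_zero) simp
      thus ?thesis using bb_nonneg by simp
    next
      case False
      have t: "2 * real s - real n \<ge> 1" using False by linarith
      have u: "real m2 - real n \<ge> 1" using True by linarith
      have D: "(real n + 1)^2 * bb s (Suc n) \<le> 2 * (2 * real s - real n) * bb s n"
        using DE_nonneg[OF s1, of n] unfolding DD_def by simp
      have lt: "2 * (2 * real s - real n) * (real m2 - real n) \<le> (real n + 1)^2"
        using hh t u by (simp add: power2_eq_square algebra_simps)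
      have "(real n + 1)^2 * ((real m2 - real n) * bb s (Suc n)) = (real m2 - real n) * ((real n + 1)^2 * bb s (Suc n))" by simp
      also have "\<dots> \<le> (real m2 - real n) * (2 * (2 * real s - real n) * bb s n)"
        using D u by (intro mult_left_mono) auto
      also have "\<dots> = (2 * (2 * real s - real n) * (real m2 - real n)) * bb s n" by simp
      also have "\<dots> \<le> (real n + 1)^2 * bb s n" using lt bb_nonneg by (intro mult_right_mono) auto
      finally have "(real n + 1)^2 * ((real m2 - real n) * bb s (Suc n)) \<le> (real n + 1)^2 * bb s n" .
      hence "(real m2 - real n) * bb s (Suc n) \<le> bb s n"
        by (rule mult_left_le_imp_le) simp
      thus ?thesis by simp
    qed
  qed
  have F1: "FF s m2 (Suc n) = ?P * ((real m2 - real n) * bb s (Suc n))" using FF_Suc[of s m2 n] by simp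
  have F0: "FF s m2 n = ?P * bb s n" by (simp add: FF_def)
  show ?thesis
  proof (cases "?P = 0")
    case True
    show ?thesis unfolding F1 F0 True by simp
  next
    case False
    hence "(real m2 - real n) * bb s (Suc n) \<le> bb s n" using key by simp
    hence "?P * ((real m2 - real n) * bb s (Suc n)) \<le> ?P * bb s n" using P0 by (intro mult_left_mono)
    thus ?thesis unfolding F1 F0 .
  qed
qed

lemma chain_up:
  fixes f :: "int \<Rightarrow> int"
  assumes st: "\<forall>N. N + 1 \<le> g \<longrightarrow> f N \<le> f (N+1)" and NM: "N \<le> M" and Mg: "M \<le> g"
  shows "f N \<le> f M"
proof -
  obtain k where k: "M = N + int k" using NM by (metis le_iff_add nat_le_iff_add zle_iff_zadd)
  have "\<forall>M. M = N + int k \<longrightarrow> M \<le> g \<longrightarrow> f N \<le> f M"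
  proof (induction k)
    case 0 thus ?case by simp
  next
    case (Suc k)
    show ?case
    proof (intro allI impI)
      fix M assume M: "M = N + int (Suc k)" "M \<le> g"
      have "f N \<le> f (N + int k)" using Suc M by auto
      also have "\<dots> \<le> f (N + int k + 1)" using st M by auto
      moreover have "M = N + int k + 1" using M by simp
      ultimately show "f N \<le> f M" by simp
    qed
  qed
  thus ?thesis using k Mg by blast
qed

lemma chain_down:
  fixes f :: "int \<Rightarrow> int"
  assumes st: "\<forall>N. g \<le> N \<longrightarrow> f (N+1) \<le> f N" and gN: "g \<le> N" and NM: "N \<le> M"
  shows "f M \<le> f N"
proof -
  obtain k where k: "M = N + int k" using NM by (metis le_iff_add nat_le_iff_add zle_iff_zadd)
  have "\<forall>M. M = N + int k \<longrightarrow> f M \<le> f N"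
  proof (induction k)
    case 0 thus ?case by simp
  next
    case (Suc k)
    show ?case
    proof (intro allI impI)
      fix M assume M: "M = N + int (Suc k)"
      have "f (N + int k + 1) \<le> f (N + int k)" using st gN by auto
      also have "\<dots> \<le> f N" using Suc by auto
      moreover have "M = N + int k + 1" using M by simp
      ultimately show "f M \<le> f N" by simp
    qed
  qed
  thus ?thesis using k by blast
qed

theorem theorem1p1:
  fixes s1 s2 :: int
  assumes "s1 \<ge> 1" and "s2 \<ge> 0"
  shows "\<exists>g::int.
     (\<forall>N M. N \<le> M \<and> M \<le> g \<longrightarrow> f12 s1 s2 N \<le> f12 s1 s2 M) \<and>
     (\<forall>N M. g \<le> N \<and> N \<le> M \<longrightarrow> f12 s1 s2 M \<le> f12 s1 s2 N) \<and>
     (\<exists>\<delta>::int. \<delta> \<in> {0, 1} \<and>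
        g = \<lfloor>2 * real_of_int s1 + real_of_int s2 + 3/2
              - sqrt (4 * (real_of_int s1)^2 + 4 * real_of_int s1 + (real_of_int s2 + 1/2)^2)\<rfloor> + \<delta>)"
proof -
  define s where "s = nat s1"
  define m2 where "m2 = nat s2"
  have s1e: "s1 = int s" using assms unfolding s_def by simp
  have s2e: "s2 = int m2" using assms unfolding m2_def by simp
  have s1p: "s \<ge> 1" using assms unfolding s_def by simp
  define D0 where "D0 = 4 * (real s)^2 + 4 * real s + (real m2 + 1/2)^2"
  define X where "X = 2 * real s + real m2 + 3/2 - sqrt D0"
  have Xe: "2 * real_of_int s1 + real_of_int s2 + 3/2
              - sqrt (4 * (real_of_int s1)^2 + 4 * real_of_int s1 + (real_of_int s2 + 1/2)^2) = X"
    unfolding X_def D0_def s1e s2e by simp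
  define F where "F = \<lfloor>X\<rfloor>"
  define f where "f = f12 s1 s2"
  have D0p: "D0 \<ge> 0" unfolding D0_def by simp
  have sq: "(sqrt D0)^2 = D0" using D0p by simp
  have X0: "X \<ge> 0"
  proof -
    have "D0 \<le> (2 * real s + real m2 + 3/2)^2" unfolding D0_def by (simp add: power2_eq_square algebra_simps)
    hence "sqrt D0 \<le> sqrt ((2 * real s + real m2 + 3/2)^2)" by (rule real_sqrt_le_mono)
    also have "\<dots> = 2 * real s + real m2 + 3/2" by simp
    finally show ?thesis unfolding X_def by simp
  qed
  have F0: "F \<ge> 0" unfolding F_def using X0 by simp
  have fnat: "real_of_int (f (int n)) = FF s m2 n" for n
    unfolding f_def s1e s2e by (rule f12_eq)
  have fneg: "N < 0 \<Longrightarrow> f N = 0" for N unfolding f_def by (rule f12_neg)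
  have fnn: "f N \<ge> 0" for N
  proof (cases "N < 0")
    case True thus ?thesis using fneg by simp
  next
    case False
    then obtain n where "N = int n" by (metis nonneg_int_cases not_less)
    thus ?thesis using fnat[of n] FF_nonneg[of s m2 n] by (metis of_int_0_le_iff)
  qed
  have UP: "\<forall>N. N + 1 \<le> F \<longrightarrow> f N \<le> f (N+1)"
  proof (intro allI impI)
    fix N assume NF: "N + 1 \<le> F"
    show "f N \<le> f (N+1)"
    proof (cases "N < 0")
      case True thus ?thesis using fneg fnn by simp
    next
      case False
      then obtain n where n: "N = int n" by (metis nonneg_int_cases not_less)
      have "real_of_int (N + 1) \<le> X" using NF unfolding F_def by (simp add: le_floor_iff)
      hence le: "sqrt D0 \<le> 2 * real s + real m2 + 1/2 - real n" unfolding X_def n by simp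
      have "D0 \<le> (2 * real s + real m2 + 1/2 - real n)^2"
      proof -
        have "(sqrt D0)^2 \<le> (2 * real s + real m2 + 1/2 - real n)^2"
          using le D0p by (intro power_mono) auto
        thus ?thesis using sq by simp
      qed
      hence h: "2 * (2 * real s - real n) * (real m2 - real n) \<ge> (real n)^2 + real n + 2 * real s"
        unfolding D0_def by (simp add: power2_eq_square algebra_simps)
      have "FF s m2 n \<le> FF s m2 (Suc n)" by (rule claimA[OF s1p h])
      hence "real_of_int (f N) \<le> real_of_int (f (N+1))"
        using fnat[of n] fnat[of "Suc n"] n by (simp add: add.commute)
      thus ?thesis by simp
    qed
  qed
  have DOWN: "\<forall>N. F + 1 \<le> N \<longrightarrow> f (N+1) \<le> f N"
  proof (intro allI impI)
    fix N assume NF: "F + 1 \<le> N"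
    hence "N \<ge> 0" using F0 by simp
    then obtain n where n: "N = int n" by (metis nonneg_int_cases)
    have "\<lfloor>X\<rfloor> < N" using NF unfolding F_def by simp
    hence "X < real_of_int N" by (simp add: floor_less_iff)
    hence lt: "2 * real s + real m2 + 3/2 - real n < sqrt D0" unfolding X_def n by simp
    have h: "2 * (2 * real s - real n) * (real m2 - real n) + (2 * real s - real n) + (real m2 - real n) + 2 < (real n)^2 + real n"
      if "n < m2"
    proof -
      have pos: "2 * real s + real m2 + 3/2 - real n \<ge> 0" using that by linarith
      have "(2 * real s + real m2 + 3/2 - real n)^2 < (sqrt D0)^2"
        using lt pos by (intro power_strict_mono) auto
      hence "(2 * real s + real m2 + 3/2 - real n)^2 < D0" using sq by simp
      thus ?thesis unfolding D0_def by (simp add: power2_eq_square algebra_simps)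
    qed
    have "FF s m2 (Suc n) \<le> FF s m2 n" by (rule claimB[OF s1p h])
    hence "real_of_int (f (N+1)) \<le> real_of_int (f N)"
      using fnat[of n] fnat[of "Suc n"] n by (simp add: add.commute)
    thus "f (N+1) \<le> f N" by simp
  qed
  show ?thesis
  proof (cases "f (F+1) \<le> f F")
    case True
    have A: "\<forall>N M. N \<le> M \<and> M \<le> F \<longrightarrow> f N \<le> f M" using chain_up[OF UP] by blast
    have st: "\<forall>N. F \<le> N \<longrightarrow> f (N+1) \<le> f N"
    proof (intro allI impI)
      fix N assume "F \<le> N"
      thus "f (N+1) \<le> f N" using True DOWN by (cases "N = F") auto
    qed
    have B: "\<forall>N M. F \<le> N \<and> N \<le> M \<longrightarrow> f M \<le> f N" using chain_down[OF st] by blast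
    show ?thesis
      apply (rule exI[of _ F])
      using A B unfolding f_def Xe F_def by auto
  next
    case False
    have st: "\<forall>N. N + 1 \<le> F + 1 \<longrightarrow> f N \<le> f (N+1)"
    proof (intro allI impI)
      fix N assume "N + 1 \<le> F + 1"
      thus "f N \<le> f (N+1)" using False UP by (cases "N = F") auto
    qed
    have A: "\<forall>N M. N \<le> M \<and> M \<le> F + 1 \<longrightarrow> f N \<le> f M" using chain_up[OF st] by blast
    have st2: "\<forall>N. F + 1 \<le> N \<longrightarrow> f (N+1) \<le> f N" using DOWN by blast
    have B: "\<forall>N M. F + 1 \<le> N \<and> N \<le> M \<longrightarrow> f M \<le> f N" using chain_down[OF st2] by blast
    show ?thesis
      apply (rule exI[of _ "F + 1"])
      using A B unfolding f_def Xe F_def by auto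
  qed
qed

end
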